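(* Consider the $N$ iOFP systems with exosystem-generated disturbances described in the context, over a connected undirected graph with $E$ edges and incidence matrix $B=[b_{ig}]\in\mathbb R^{N\times E}$. Let $R=\mathrm{diag}(R_1,\dots,R_N)$, $m=\sum_i m_i$, $H=(B^+\otimes I_q)R\in\mathbb R^{Eq\times m}$ and let $H_g\in\mathbb R^{q\times m}$ be its $g$-th block row, so $H=[H_1;\dots;H_E]$. Let $s(w):=[s_1(w_1);\dots;s_N(w_N)]$ for $w=[w_1;\dots;w_N]\in\mathbb R^m$. For each edge $g=1,\dots,E$ set $\varrho_g=\sum_{j}b_{jg}y_j$ and use the controller $$\dot\zeta_g=s(\zeta_g)+H_g^\top\varrho_g,\qquad \dot\kappa_g=\delta_g\varrho_g^\top\varrho_g,\qquad v_g=H_g\zeta_g+\kappa_g\varrho_g,$$ with $\zeta_g\in\mathbb R^m$, $\kappa_g\in\mathbb R$, arbitrary gains $\delta_g>0$ and arbitrary initial conditions, and set the inputs $u_i=-\sum_{g=1}^E b_{ig}v_g$, $i=1,\dots,N$. If the closed-loop solution $(x,\zeta,\kappa)$ is bounded on $[0,\infty)$, then $\lim_{t\to\infty}\|y_i(t)-\bar y(t)\|=0$ for all $i$, where $\bar y=\frac1N\sum_j y_j$.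
   Context: Each system $\dot x_i=f(x_i,u_i,d_i)$, $y_i=h(x_i)$ has $x_i\in\mathbb R^n$, $u_i,y_i,d_i\in\mathbb R^q$; $f$ locally Lipschitz, $h$ continuously differentiable. iOFP with constant $\sigma\in\mathbb R$: there exist $\Phi:\mathbb R^n\times\mathbb R^n\to\mathbb R_{\ge0}$ (continuously differentiable) and class-$\mathcal K_\infty$ functions $\underline\alpha,\overline\alpha$ with $\underline\alpha(\|x_i-x_i'\|)\le\Phi(x_i,x_i')\le\overline\alpha(\|x_i-x_i'\|)$ and $\frac{\partial\Phi}{\partial x_i}(x_i,x_i')f(x_i,u_i,d_i)+\frac{\partial\Phi}{\partial x_i'}(x_i,x_i')f(x_i',u_i',d_i')\le\sigma\|y_i-y_i'\|^2+(y_i-y_i')^\top\big((u_i+d_i)-(u_i'+d_i')\big)$ for all arguments. Exosystems: $\dot w_i=s_i(w_i)$, $d_i=R_iw_i$, $w_i\in\mathbb R^{m_i}$, $s_i$ locally Lipschitz, $s_i(0)=0$, $(w_i-w_i')^\top(s_i(w_i)-s_i(w_i'))\le0$ for all $w_i,w_i'$. Graph: symmetric nonnegative adjacency $A=[a_{ij}]$, connected. Incidence matrix: for the $g$-th edge $(i,j)$ (each undirected edge taken once with an orientation), $b_{ig}=-\sqrt{a_{ij}}$, $b_{jg}=\sqrt{a_{ij}}$, and $b_{kg}=0$ otherwise; thus $L=BB^\top$ is the Laplacian. $B^+$ is the Moore–Penrose pseudoinverse, $\otimes$ the Kronecker product. *)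

theory Defs
  imports "HOL-Analysis.Analysis"
begin

definition class_K_inf :: "(real \<Rightarrow> real) \<Rightarrow> bool" where
  "class_K_inf \<alpha> \<longleftrightarrow> continuous_on {0..} \<alpha> \<and> \<alpha> 0 = 0 \<and> strict_mono_on {0..} \<alpha>
      \<and> filterlim \<alpha> at_top at_top"

definition loc_lipschitz :: "('a::metric_space \<Rightarrow> 'b::metric_space) \<Rightarrow> bool" where
  "loc_lipschitz F \<longleftrightarrow> (\<forall>z. \<exists>e>0. \<exists>L. \<forall>a\<in>cball z e. \<forall>b\<in>cball z e. dist (F a) (F b) \<le> L * dist a b)"

definition is_MP_pinv :: "real^'c^'r \<Rightarrow> real^'r^'c \<Rightarrow> bool" where
  "is_MP_pinv M P \<longleftrightarrow> M ** P ** M = M \<and> P ** M ** P = P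
      \<and> transpose (M ** P) = M ** P \<and> transpose (P ** M) = P ** M"

definition connected_adj :: "real^'v^'v \<Rightarrow> bool" where
  "connected_adj A \<longleftrightarrow> (\<forall>i j. (i, j) \<in> {(a, b). A$a$b > 0}\<^sup>*)"

(* ends: each edge index g is an undirected edge {i,j} (i ~= j, a_ij > 0) with a chosen
   orientation (i,j); every such undirected edge appears exactly once *)
definition edge_enumeration :: "real^'v^'v \<Rightarrow> ('e \<Rightarrow> 'v \<times> 'v) \<Rightarrow> bool" where
  "edge_enumeration A ends \<longleftrightarrow>
     (\<forall>g. fst (ends g) \<noteq> snd (ends g) \<and> A $ fst (ends g) $ snd (ends g) > 0) \<and>
     (\<forall>g g'. {fst (ends g), snd (ends g)} = {fst (ends g'), snd (ends g')} \<longrightarrow> g = g') \<and>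
     (\<forall>i j. i \<noteq> j \<and> A$i$j > 0 \<longrightarrow> (\<exists>g. {fst (ends g), snd (ends g)} = {i, j}))"

definition incidence_matrix :: "real^'v^'v \<Rightarrow> ('e \<Rightarrow> 'v \<times> 'v) \<Rightarrow> real^'e^'v" where
  "incidence_matrix A ends = (\<chi> k g. let (i, j) = ends g in
       if k = i then - sqrt (A$i$j) else if k = j then sqrt (A$i$j) else 0)"

(* exosystem coordinates: the stacked exostate w \<in> R^m has coordinate type 'm;
   blk k is the agent to which coordinate k belongs, so R^{m_i} is the subspace of
   vectors supported on {k. blk k = i} *)
definition in_block :: "('m \<Rightarrow> 'v) \<Rightarrow> 'v \<Rightarrow> real^'m \<Rightarrow> bool" where
  "in_block blk i w \<longleftrightarrow> (\<forall>k. blk k \<noteq> i \<longrightarrow> w$k = 0)"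

definition block_proj :: "('m \<Rightarrow> 'v) \<Rightarrow> 'v \<Rightarrow> real^'m \<Rightarrow> real^'m" where
  "block_proj blk i w = (\<chi> k. if blk k = i then w$k else 0)"

definition block_proj_mat :: "('m \<Rightarrow> 'v) \<Rightarrow> 'v \<Rightarrow> real^'m^'m" where
  "block_proj_mat blk i = (\<chi> k l. if k = l \<and> blk k = i then 1 else 0)"

(* s(w) = [s_1(w_1); ...; s_N(w_N)] *)
definition stack_s :: "('m \<Rightarrow> 'v::finite) \<Rightarrow> ('v \<Rightarrow> real^'m \<Rightarrow> real^'m) \<Rightarrow> real^'m \<Rightarrow> real^'m" where
  "stack_s blk sl w = (\<Sum>i\<in>UNIV. sl i (block_proj blk i w))"

(* g-th block row of H = (B^+ \<otimes> I_q) diag(R_1,...,R_N) *)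
definition H_row :: "real^'v^'e \<Rightarrow> ('v::finite \<Rightarrow> real^'m^'q) \<Rightarrow> ('m \<Rightarrow> 'v) \<Rightarrow> 'e \<Rightarrow> real^'m^'q" where
  "H_row Bp Rm blk g = (\<Sum>j\<in>UNIV. (Bp$g$j) *\<^sub>R (Rm j ** block_proj_mat blk j))"

end

theory Submission
  imports Defs
begin


lemma incr_within:
  fixes \<phi> D :: "real \<Rightarrow> real"
  assumes "0 \<le> a" "a \<le> b"
    and der: "\<And>\<tau>. \<tau> \<in> {a..b} \<Longrightarrow> (\<phi> has_real_derivative D \<tau>) (at \<tau> within {0..})"
    and nn: "\<And>\<tau>. \<tau> \<in> {a..b} \<Longrightarrow> D \<tau> \<ge> 0"
  shows "\<phi> a \<le> \<phi> b"
proof (rule DERIV_nonneg_imp_increasing_open[OF \<open>a \<le> b\<close>])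
  show "continuous_on {a..b} \<phi>"
  proof (clarsimp simp: continuous_on_eq_continuous_within)
    fix \<tau> assume "a \<le> \<tau>" "\<tau> \<le> b"
    then have "continuous (at \<tau> within {0..}) \<phi>"
      using der has_field_derivative_imp_has_derivative has_derivative_continuous by (meson atLeastAtMost_iff)
    then show "continuous (at \<tau> within {a..b}) \<phi>"
      by (rule continuous_within_subset) (use assms in auto)
  qed
  fix x assume x: "a < x" "x < b"
  then have "x \<in> interior {0..}" using assms by auto
  then have "at x within {0..} = at x" by (rule at_within_interior)
  then show "\<exists>y. (\<phi> has_real_derivative y) (at x) \<and> 0 \<le> y"
    using der[of x] nn[of x] x by auto
qed

lemma barbalat:
  fixes k :: "real \<Rightarrow> real" and r :: "real \<Rightarrow> 'a::real_normed_vector"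
  assumes der: "\<And>t. t \<ge> 0 \<Longrightarrow> (k has_real_derivative (c * (norm (r t))\<^sup>2)) (at t within {0..})"
    and c: "c > 0"
    and K: "\<And>t. t \<ge> 0 \<Longrightarrow> k t \<le> K"
    and L: "\<And>s t. s \<ge> 0 \<Longrightarrow> t \<ge> 0 \<Longrightarrow> norm (r s - r t) \<le> L * \<bar>s - t\<bar>"
    and Lpos: "L > 0"
  shows "(r \<longlongrightarrow> 0) at_top"
proof (rule ccontr)
  assume nt: "\<not> (r \<longlongrightarrow> 0) at_top"
  obtain \<epsilon> where e: "\<epsilon> > 0" and big: "\<And>N. \<exists>t\<ge>N. norm (r t) \<ge> \<epsilon>"
  proof -
    from nt obtain \<epsilon> where "\<epsilon> > 0" "\<not> eventually (\<lambda>t. dist (r t) 0 < \<epsilon>) at_top"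
      unfolding tendsto_iff by blast
    then have "\<And>N. \<exists>t\<ge>N. norm (r t) \<ge> \<epsilon>" unfolding eventually_at_top_linorder
      by (auto simp: not_less)
    then show ?thesis using that \<open>\<epsilon> > 0\<close> by blast
  qed
  define d where "d = \<epsilon> / (2 * L)"
  define c' where "c' = c * (\<epsilon>/2)\<^sup>2 * d"
  have d: "d > 0" using e Lpos by (simp add: d_def)
  have c': "c' > 0" using c e d by (simp add: c'_def)
  define S where "S = Sup (k ` {0..})"
  have bdd: "bdd_above (k ` {0..})" by (rule bdd_aboveI[where M=K]) (use K in auto)
  have "S - c' < S" using c' by simp
  then obtain T where T: "T \<ge> 0" "k T > S - c'"
    unfolding S_def by (subst (asm) less_cSup_iff[OF _ bdd]) auto
  obtain t where t: "t \<ge> max T 1" "norm (r t) \<ge> \<epsilon>" using big by blast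
  have t0: "t \<ge> 0" using t by simp
  have mono1: "k T \<le> k t"
    by (rule incr_within[where D = "\<lambda>\<tau>. c * (norm (r \<tau>))\<^sup>2"]) (use T t c der in auto)
  have low: "norm (r \<tau>) \<ge> \<epsilon>/2" if "\<tau> \<in> {t..t+d}" for \<tau>
  proof -
    have "norm (r \<tau> - r t) \<le> L * \<bar>\<tau> - t\<bar>" using L[of \<tau> t] that t0 by auto
    also have "\<dots> \<le> L * d" using that Lpos by auto
    also have "\<dots> = \<epsilon>/2" using Lpos by (simp add: d_def)
    finally have "norm (r \<tau> - r t) \<le> \<epsilon>/2" .
    moreover have "norm (r t) - norm (r \<tau>) \<le> norm (r \<tau> - r t)"
      using norm_triangle_ineq2[of "r t" "r \<tau>"] by (simp add: norm_minus_commute)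
    ultimately show ?thesis using t by linarith
  qed
  have "(\<lambda>\<tau>. k \<tau> - c * (\<epsilon>/2)\<^sup>2 * \<tau>) t \<le> (\<lambda>\<tau>. k \<tau> - c * (\<epsilon>/2)\<^sup>2 * \<tau>) (t + d)"
  proof (rule incr_within[where D = "\<lambda>\<tau>. c * (norm (r \<tau>))\<^sup>2 - c * (\<epsilon>/2)\<^sup>2" and \<phi>="\<lambda>\<tau>. k \<tau> - c * (\<epsilon>/2)\<^sup>2 * \<tau>"])
    fix \<tau> assume \<tau>: "\<tau> \<in> {t..t+d}"
    then show "((\<lambda>\<tau>. k \<tau> - c * (\<epsilon>/2)\<^sup>2 * \<tau>) has_real_derivative c * (norm (r \<tau>))\<^sup>2 - c * (\<epsilon>/2)\<^sup>2) (at \<tau> within {0..})"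
      using t0 by (auto intro!: derivative_eq_intros der)
    have "(\<epsilon>/2)\<^sup>2 \<le> (norm (r \<tau>))\<^sup>2" using low[OF \<tau>] e by (intro power_mono) auto
    then show "c * (norm (r \<tau>))\<^sup>2 - c * (\<epsilon>/2)\<^sup>2 \<ge> 0" using c by simp
  qed (use t0 d in auto)
  then have "k (t + d) \<ge> k t + c'" by (simp add: c'_def algebra_simps)
  moreover have "k (t + d) \<le> S" unfolding S_def by (rule cSup_upper) (use bdd t0 d in auto)
  ultimately show False using mono1 T by linarith
qed

lemma inc_entry:
  "incidence_matrix A ends $ k $ g =
     (if k = fst (ends g) then - sqrt (A $ fst (ends g) $ snd (ends g))
      else if k = snd (ends g) then sqrt (A $ fst (ends g) $ snd (ends g)) else 0)"
  unfolding incidence_matrix_def by (simp add: case_prod_beta)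

lemma inc_colsum:
  fixes A :: "real^'v::finite^'v" and ends :: "'e::finite \<Rightarrow> 'v \<times> 'v"
  assumes "edge_enumeration A ends"
  shows "(\<Sum>k\<in>UNIV. incidence_matrix A ends $ k $ g) = 0"
proof -
  let ?i = "fst (ends g)" and ?j = "snd (ends g)" and ?a = "sqrt (A $ fst (ends g) $ snd (ends g))"
  have ne: "?i \<noteq> ?j" using assms unfolding edge_enumeration_def by blast
  have "(\<Sum>k\<in>UNIV. incidence_matrix A ends $ k $ g)
      = (\<Sum>k\<in>UNIV. (if k = ?i then - ?a else 0) + (if k = ?j then ?a else 0))"
    by (rule sum.cong) (use ne in \<open>auto simp: inc_entry\<close>)
  also have "\<dots> = 0" by (simp add: sum.distrib)
  finally show ?thesis .
qed

lemma inc_kernel: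
  fixes A :: "real^'v::finite^'v" and ends :: "'e::finite \<Rightarrow> 'v \<times> 'v" and z :: "'v \<Rightarrow> real"
  assumes edges: "edge_enumeration A ends" and conn: "connected_adj A"
    and kz: "\<And>g. (\<Sum>k\<in>UNIV. incidence_matrix A ends $ k $ g * z k) = 0"
  shows "z a = z b"
proof -
  have edge: "z (fst (ends g)) = z (snd (ends g))" for g
  proof -
    let ?i = "fst (ends g)" and ?j = "snd (ends g)" and ?a = "sqrt (A $ fst (ends g) $ snd (ends g))"
    have ne: "?i \<noteq> ?j" and pos: "A $ ?i $ ?j > 0" using edges unfolding edge_enumeration_def by blast+
    have "(\<Sum>k\<in>UNIV. incidence_matrix A ends $ k $ g * z k)
        = (\<Sum>k\<in>UNIV. (if k = ?i then - ?a * z ?i else 0) + (if k = ?j then ?a * z ?j else 0))"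
      by (rule sum.cong) (use ne in \<open>auto simp: inc_entry\<close>)
    also have "\<dots> = ?a * (z ?j - z ?i)" by (simp add: sum.distrib algebra_simps)
    finally have "?a * (z ?j - z ?i) = 0" using kz[of g] by simp
    moreover have "?a > 0" using pos by simp
    ultimately show ?thesis by simp
  qed
  have stp: "z p = z q" if pq: "A $ p $ q > 0" for p q
  proof (cases "p = q")
    case False
    have "\<forall>i j. i \<noteq> j \<and> A$i$j > 0 \<longrightarrow> (\<exists>g. {fst (ends g), snd (ends g)} = {i, j})"
      using edges unfolding edge_enumeration_def by (elim conjE)
    then obtain g where "{fst (ends g), snd (ends g)} = {p, q}"
      using False pq by meson
    then have "(fst (ends g) = p \<and> snd (ends g) = q) \<or> (fst (ends g) = q \<and> snd (ends g) = p)"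
      by (simp add: doubleton_eq_iff)
    then show ?thesis using edge[of g] by (elim disjE conjE) simp_all
  qed simp
  have "(a, b) \<in> {(p, q). A$p$q > 0}\<^sup>*" using conn unfolding connected_adj_def by blast
  then show ?thesis
  proof (induction rule: rtrancl_induct)
    case (step y w) then show ?case using stp[of y w] by simp
  qed simp
qed

lemma BBp_proj:
  fixes A :: "real^'v::finite^'v" and ends :: "'e::finite \<Rightarrow> 'v \<times> 'v" and Bp :: "real^'v^'e"
  assumes edges: "edge_enumeration A ends" and conn: "connected_adj A"
    and MP: "is_MP_pinv (incidence_matrix A ends) Bp"
  shows "(incidence_matrix A ends ** Bp) $ k $ i = (if k = i then 1 else 0) - 1 / real CARD('v)"
proof -
  define B where "B = incidence_matrix A ends"
  define P where "P = B ** Bp"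
  have sym: "transpose P = P" and PBB: "P ** B = B"
    using MP unfolding is_MP_pinv_def P_def B_def by auto
  have BtP: "transpose B ** P = transpose B"
  proof -
    have "transpose B ** P = transpose B ** transpose P" using sym by simp
    also have "\<dots> = transpose (P ** B)" by (simp add: matrix_transpose_mul)
    finally show ?thesis using PBB by simp
  qed
  have colP: "(\<Sum>k\<in>UNIV. P $ k $ i) = 0" for i
  proof -
    have "(\<Sum>k\<in>UNIV. P $ k $ i) = (\<Sum>k\<in>UNIV. \<Sum>g\<in>UNIV. B $ k $ g * Bp $ g $ i)"
      by (simp add: P_def matrix_matrix_mult_def)
    also have "\<dots> = (\<Sum>g\<in>UNIV. (\<Sum>k\<in>UNIV. B $ k $ g) * Bp $ g $ i)"
      by (subst sum.swap) (simp add: sum_distrib_right)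
    also have "\<dots> = 0" using inc_colsum[OF edges] by (simp add: B_def)
    finally show ?thesis .
  qed
  define z where "z k = (if k = i then 1 else 0) - P $ k $ i" for k
  have kz: "(\<Sum>k\<in>UNIV. B $ k $ g * z k) = 0" for g
  proof -
    have "(transpose B ** P) $ g $ i = transpose B $ g $ i" using BtP by simp
    then have "(\<Sum>k\<in>UNIV. B $ k $ g * P $ k $ i) = B $ i $ g"
      by (simp add: matrix_matrix_mult_def transpose_def)
    then show ?thesis
      by (simp add: z_def algebra_simps sum_subtractf if_distrib[where f="\<lambda>x. B$_$g * x"] cong: if_cong)
  qed
  have const: "z k = z i" for k
    using inc_kernel[OF edges conn, of z] kz unfolding B_def by blast
  have "(\<Sum>k\<in>UNIV. z k) = 1" using colP[of i] by (simp add: z_def sum_subtractf)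
  moreover have "(\<Sum>k\<in>UNIV. z k) = (\<Sum>k\<in>(UNIV::'v set). z i)" by (rule sum.cong) (use const in auto)
  ultimately have "real CARD('v) * z i = 1" by simp
  then have "z i = 1 / real CARD('v)" by (simp add: field_simps)
  then show ?thesis using const[of k] unfolding z_def P_def B_def by simp
qed

definition bnd :: "(real \<Rightarrow> 'a::real_normed_vector) \<Rightarrow> bool" where
  "bnd a \<longleftrightarrow> (\<exists>C. \<forall>t\<ge>0. norm (a t) \<le> C)"

lemma bnd_const: "bnd (\<lambda>t. c)"
  unfolding bnd_def by blast

lemma bnd_add: "bnd a \<Longrightarrow> bnd b \<Longrightarrow> bnd (\<lambda>t. a t + b t)"
  unfolding bnd_def by (meson add_mono norm_triangle_le)

lemma bnd_minus: "bnd a \<Longrightarrow> bnd (\<lambda>t. - a t)"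
  unfolding bnd_def by simp

lemma bnd_sum: "finite S \<Longrightarrow> (\<And>i. i \<in> S \<Longrightarrow> bnd (a i)) \<Longrightarrow> bnd (\<lambda>t. \<Sum>i\<in>S. a i t)"
proof (induction S rule: finite_induct)
  case empty then show ?case by (simp add: bnd_const)
next
  case (insert x F) then show ?case by (simp add: bnd_add)
qed

lemma bnd_scaleR: "bnd r \<Longrightarrow> bnd v \<Longrightarrow> bnd (\<lambda>t. r t *\<^sub>R v t)"
proof -
  assume "bnd r" "bnd v"
  then obtain C D where C: "\<forall>t\<ge>0. norm (r t) \<le> C" and D: "\<forall>t\<ge>0. norm (v t) \<le> D"
    unfolding bnd_def by blast
  have "norm (r t *\<^sub>R v t) \<le> C * D" if "t \<ge> 0" for t
    using C D that by (simp add: mult_mono')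
  then show ?thesis unfolding bnd_def by blast
qed

lemma bnd_nth: "bnd a \<Longrightarrow> bnd (\<lambda>t. a t $ i)"
  unfolding bnd_def by (meson Finite_Cartesian_Product.norm_nth_le order_trans)

lemma bnd_pair: "bnd a \<Longrightarrow> bnd b \<Longrightarrow> bnd (\<lambda>t. (a t, b t))"
  unfolding bnd_def by (meson add_mono norm_Pair_le order_trans)

lemma bnd_fst: "bnd a \<Longrightarrow> bnd (\<lambda>t. fst (a t))"
  unfolding bnd_def by (metis norm_fst_le order_trans prod.collapse)

lemma bnd_snd: "bnd a \<Longrightarrow> bnd (\<lambda>t. snd (a t))"
  unfolding bnd_def by (metis norm_snd_le order_trans prod.collapse)

lemma bnd_cont:
  fixes g :: "'a::{heine_borel,real_normed_vector} \<Rightarrow> 'b::real_normed_vector"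
  assumes "continuous_on UNIV g" "bnd a"
  shows "bnd (\<lambda>t. g (a t))"
proof -
  obtain C where C: "\<forall>t\<ge>0. norm (a t) \<le> C" using assms unfolding bnd_def by blast
  have "compact (g ` cball 0 C)"
    by (rule compact_continuous_image) (use assms(1) continuous_on_subset in auto)
  then obtain D where D: "\<forall>y\<in>g ` cball 0 C. norm y \<le> D"
    using compact_imp_bounded bounded_iff by metis
  have "norm (g (a t)) \<le> D" if "t \<ge> 0" for t
    using D C that by auto
  then show ?thesis unfolding bnd_def by blast
qed

lemma mv_bound:
  fixes M :: "real^'c::finite^'r::finite"
  shows "norm (M *v v) \<le> real (CARD('r) * CARD('c)) * (norm M * norm v)"
proof -
  have "norm (M *v v) \<le> (\<Sum>r\<in>UNIV. \<bar>(M *v v) $ r\<bar>)" by (rule norm_le_l1_cart)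
  also have "\<dots> \<le> (\<Sum>r\<in>(UNIV::'r set). \<Sum>c\<in>(UNIV::'c set). norm M * norm v)"
  proof (rule sum_mono)
    fix r
    have "\<bar>(M *v v) $ r\<bar> = \<bar>\<Sum>c\<in>UNIV. M $ r $ c * v $ c\<bar>" by (simp add: matrix_vector_mult_def)
    also have "\<dots> \<le> (\<Sum>c\<in>UNIV. \<bar>M $ r $ c * v $ c\<bar>)" by (rule sum_abs)
    also have "\<dots> \<le> (\<Sum>c\<in>(UNIV::'c set). norm M * norm v)"
    proof (rule sum_mono)
      fix c
      have "\<bar>M $ r $ c\<bar> \<le> norm M"
        using component_le_norm_cart[of "M $ r" c] Finite_Cartesian_Product.norm_nth_le[of M r] by linarith
      moreover have "\<bar>v $ c\<bar> \<le> norm v" by (rule component_le_norm_cart)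
      ultimately show "\<bar>M $ r $ c * v $ c\<bar> \<le> norm M * norm v"
        by (simp add: abs_mult mult_mono')
    qed
    finally show "\<bar>(M *v v) $ r\<bar> \<le> (\<Sum>c\<in>(UNIV::'c set). norm M * norm v)" .
  qed
  also have "\<dots> = real (CARD('r) * CARD('c)) * (norm M * norm v)" by simp
  finally show ?thesis .
qed

lemma bnd_mv:
  fixes M :: "real \<Rightarrow> real^'c::finite^'r::finite"
  assumes "bnd M" "bnd v"
  shows "bnd (\<lambda>t. M t *v v t)"
proof -
  obtain C D where C: "\<forall>t\<ge>0. norm (M t) \<le> C" and D: "\<forall>t\<ge>0. norm (v t) \<le> D"
    using assms unfolding bnd_def by blast
  have "norm (M t *v v t) \<le> real (CARD('r) * CARD('c)) * (C * D)" if "t \<ge> 0" for t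
  proof -
    have "norm (M t) * norm (v t) \<le> C * D" using C D that by (simp add: mult_mono')
    then show ?thesis using mv_bound[of "M t" "v t"] by (smt (verit) mult_left_mono of_nat_0_le_iff)
  qed
  then show ?thesis unfolding bnd_def by blast
qed

lemma loc_lip_cont:
  assumes "loc_lipschitz F"
  shows "continuous_on UNIV F"
proof -
  have "continuous (at z) F" for z
  proof -
    obtain e L where e: "e > 0" and L: "\<forall>a\<in>cball z e. \<forall>b\<in>cball z e. dist (F a) (F b) \<le> L * dist a b"
      using assms unfolding loc_lipschitz_def by blast
    have "(max L 0)-lipschitz_on (cball z e) F"
      unfolding lipschitz_on_def using L
      by (auto intro: order_trans[OF _ mult_right_mono[OF max.cobounded1]])
    then have "continuous_on (cball z e) F" by (rule lipschitz_on_continuous_on)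
    moreover have "z \<in> interior (cball z e)" using e interior_maximal[OF ball_subset_cball open_ball, of z e] by auto
    ultimately show ?thesis by (rule continuous_on_interior)
  qed
  then show ?thesis by (simp add: continuous_at_imp_continuous_on)
qed

lemma hvd_scale:
  assumes "(g has_vector_derivative g') (at t within S)"
  shows "((\<lambda>\<tau>. c *\<^sub>R g \<tau>) has_vector_derivative c *\<^sub>R g') (at t within S)"
  using has_vector_derivative_scaleR[OF DERIV_const[of c] assms] by simp

lemma hvd_inner_self:
  assumes "(v has_vector_derivative v') (at t within S)"
  shows "((\<lambda>\<tau>. v \<tau> \<bullet> v \<tau>) has_real_derivative 2 * (v t \<bullet> v')) (at t within S)"
proof -
  have d: "(v has_derivative (\<lambda>s. s *\<^sub>R v')) (at t within S)"
    using assms by (simp add: has_vector_derivative_def)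
  have "((\<lambda>\<tau>. v \<tau> \<bullet> v \<tau>) has_derivative (\<lambda>s. v t \<bullet> (s *\<^sub>R v') + (s *\<^sub>R v') \<bullet> v t)) (at t within S)"
    by (rule has_derivative_inner[OF d d])
  then show ?thesis unfolding has_field_derivative_def
    by (rule has_derivative_eq_rhs) (auto simp: inner_commute algebra_simps fun_eq_iff)
qed

lemma lip_from_deriv:
  fixes r :: "real \<Rightarrow> 'a::real_normed_vector"
  assumes der: "\<And>t. t \<ge> 0 \<Longrightarrow> (r has_vector_derivative G t) (at t within {0..})"
    and bG: "\<And>t. t \<ge> 0 \<Longrightarrow> norm (G t) \<le> C"
  shows "\<exists>L>0. \<forall>s t. s \<ge> 0 \<longrightarrow> t \<ge> 0 \<longrightarrow> norm (r s - r t) \<le> L * \<bar>s - t\<bar>"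
proof -
  have "norm (r s - r t) \<le> C * norm (s - t)" if "s \<ge> 0" "t \<ge> 0" for s t
  proof (rule differentiable_bound[where S="{0..}" and f'="\<lambda>t s. s *\<^sub>R G t"])
    show "convex {0::real..}" by (rule convex_real_interval)
    fix x :: real assume "x \<in> {0..}"
    then show "(r has_derivative (\<lambda>s. s *\<^sub>R G x)) (at x within {0..})"
      using der[of x] by (simp add: has_vector_derivative_def)
    have "onorm (\<lambda>s::real. s *\<^sub>R G x) = onorm (\<lambda>s::real. s) * norm (G x)"
      by (rule onorm_scaleR_left) (rule bounded_linear_ident)
    then show "onorm (\<lambda>s::real. s *\<^sub>R G x) \<le> C" using bG[of x] \<open>x \<in> {0..}\<close> by (simp add: onorm_id)
  qed (use that in auto)
  then have "norm (r s - r t) \<le> max C 1 * \<bar>s - t\<bar>" if "s \<ge> 0" "t \<ge> 0" for s t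
    using that by (smt (verit) abs_ge_zero mult_right_mono real_norm_def)
  then show ?thesis by (intro exI[of _ "max C 1"]) auto
qed

theorem theorem2:
  fixes f :: "real^'n \<Rightarrow> real^'q \<Rightarrow> real^'q \<Rightarrow> real^'n"
    and h :: "real^'n \<Rightarrow> real^'q"
    and \<sigma> :: real
    and \<Phi> :: "(real^'n) \<times> (real^'n) \<Rightarrow> real"
    and grad\<Phi> :: "(real^'n) \<times> (real^'n) \<Rightarrow> (real^'n) \<times> (real^'n)"
    and \<alpha>l \<alpha>u :: "real \<Rightarrow> real"
    and blk :: "'m::finite \<Rightarrow> 'v::finite"
    and sl :: "'v \<Rightarrow> real^'m \<Rightarrow> real^'m"
    and Rm :: "'v \<Rightarrow> real^'m^'q"
    and A :: "real^'v^'v"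
    and ends :: "'e::finite \<Rightarrow> 'v \<times> 'v"
    and B :: "real^'e^'v"
    and Bp :: "real^'v^'e"
    and \<delta> :: "'e \<Rightarrow> real"
    and x :: "real \<Rightarrow> real^'n^'v"
    and w :: "'v \<Rightarrow> real \<Rightarrow> real^'m"
    and \<zeta> :: "real \<Rightarrow> real^'m^'e"
    and \<kappa> :: "real \<Rightarrow> real^'e"
  assumes f_lip: "loc_lipschitz (\<lambda>(z, u, d). f z u d)"
    and h_C1: "\<exists>Dh :: real^'n \<Rightarrow> real^'n^'q. (\<forall>z. (h has_derivative (\<lambda>v. Dh z *v v)) (at z))
                  \<and> continuous_on UNIV Dh"
    and \<Phi>_C1: "\<forall>z. (\<Phi> has_derivative (\<lambda>v. grad\<Phi> z \<bullet> v)) (at z)" "continuous_on UNIV grad\<Phi>"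
    and \<alpha>_K: "class_K_inf \<alpha>l" "class_K_inf \<alpha>u"
    and \<Phi>_bounds: "\<forall>z z'. \<alpha>l (norm (z - z')) \<le> \<Phi> (z, z') \<and> \<Phi> (z, z') \<le> \<alpha>u (norm (z - z'))"
    and iOFP: "\<forall>z z' u u' d d'.
        grad\<Phi> (z, z') \<bullet> (f z u d, 0) + grad\<Phi> (z, z') \<bullet> (0, f z' u' d')
          \<le> \<sigma> * (norm (h z - h z'))\<^sup>2 + (h z - h z') \<bullet> ((u + d) - (u' + d'))"
    and s_maps: "\<forall>i w0. in_block blk i w0 \<longrightarrow> in_block blk i (sl i w0)"
    and s_lip: "\<forall>i. loc_lipschitz (\<lambda>w0. sl i (block_proj blk i w0))"
    and s_zero: "\<forall>i. sl i 0 = 0"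
    and s_mono: "\<forall>i w0 w0'. in_block blk i w0 \<and> in_block blk i w0' \<longrightarrow>
                    (w0 - w0') \<bullet> (sl i w0 - sl i w0') \<le> 0"
    and A_sym: "transpose A = A"
    and A_nonneg: "\<forall>i j. A$i$j \<ge> 0"
    and A_conn: "connected_adj A"
    and edges: "edge_enumeration A ends"
    and B_def: "B = incidence_matrix A ends"
    and Bp_def: "is_MP_pinv B Bp"
    and \<delta>_pos: "\<forall>g. \<delta> g > 0"
    and w_block: "\<forall>i t. t \<ge> 0 \<longrightarrow> in_block blk i (w i t)"
    and w_ode: "\<forall>i t. t \<ge> 0 \<longrightarrow> (w i has_vector_derivative sl i (w i t)) (at t within {0..})"
    and x_ode: "\<forall>i t. t \<ge> 0 \<longrightarrow>
        ((\<lambda>\<tau>. x \<tau> $ i) has_vector_derivative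
          f (x t $ i)
            (- (\<Sum>g\<in>UNIV. B$i$g *\<^sub>R
                 (H_row Bp Rm blk g *v \<zeta> t $ g
                  + \<kappa> t $ g *\<^sub>R (\<Sum>j\<in>UNIV. B$j$g *\<^sub>R h (x t $ j)))))
            (Rm i *v w i t)) (at t within {0..})"
    and \<zeta>_ode: "\<forall>g t. t \<ge> 0 \<longrightarrow>
        ((\<lambda>\<tau>. \<zeta> \<tau> $ g) has_vector_derivative
          stack_s blk sl (\<zeta> t $ g)
            + transpose (H_row Bp Rm blk g) *v (\<Sum>j\<in>UNIV. B$j$g *\<^sub>R h (x t $ j)))
          (at t within {0..})"
    and \<kappa>_ode: "\<forall>g t. t \<ge> 0 \<longrightarrow>
        ((\<lambda>\<tau>. \<kappa> \<tau> $ g) has_real_derivative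
          \<delta> g * ((\<Sum>j\<in>UNIV. B$j$g *\<^sub>R h (x t $ j)) \<bullet> (\<Sum>j\<in>UNIV. B$j$g *\<^sub>R h (x t $ j))))
          (at t within {0..})"
    and bdd: "bounded ((\<lambda>t. (x t, \<zeta> t, \<kappa> t)) ` {0..})"
  shows "\<forall>i. ((\<lambda>t. norm (h (x t $ i) - (1 / real CARD('v)) *\<^sub>R (\<Sum>j\<in>UNIV. h (x t $ j)))) \<longlongrightarrow> 0) at_top"
  proof -
  obtain Dh :: "real^'n \<Rightarrow> real^'n^'q" where Dh: "\<And>z. (h has_derivative (\<lambda>v. Dh z *v v)) (at z)"
    and Dh_cont: "continuous_on UNIV Dh" using h_C1 by blast
  have h_cont: "continuous_on UNIV h"
    by (rule continuous_at_imp_continuous_on) (use Dh has_derivative_continuous in blast)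
  have f_cont: "continuous_on UNIV (\<lambda>(z, u, d). f z u d)" by (rule loc_lip_cont[OF f_lip])
  obtain M where M: "\<forall>p\<in>(\<lambda>t. (x t, \<zeta> t, \<kappa> t)) ` {0..}. norm p \<le> M"
    using bdd unfolding bounded_iff by blast
  have btr: "bnd (\<lambda>t. (x t, \<zeta> t, \<kappa> t))" unfolding bnd_def using M by auto
  have bx: "bnd x" using bnd_fst[OF btr] by simp
  have bzk: "bnd (\<lambda>t. (\<zeta> t, \<kappa> t))" using bnd_snd[OF btr] by simp
  have bz: "bnd \<zeta>" using bnd_fst[OF bzk] by simp
  have bk: "bnd \<kappa>" using bnd_snd[OF bzk] by simp
  have bw: "bnd (w i)" for i
  proof -
    have "norm (w i t) \<le> norm (w i 0)" if t: "t \<ge> 0" for t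
    proof -
      have "(\<lambda>\<tau>. - (w i \<tau> \<bullet> w i \<tau>)) 0 \<le> (\<lambda>\<tau>. - (w i \<tau> \<bullet> w i \<tau>)) t"
      proof (rule incr_within[where D="\<lambda>\<tau>. - (2 * (w i \<tau> \<bullet> sl i (w i \<tau>)))" and \<phi>="\<lambda>\<tau>. - (w i \<tau> \<bullet> w i \<tau>)"])
        fix \<tau> assume \<tau>: "\<tau> \<in> {0..t}"
        show "((\<lambda>\<tau>. - (w i \<tau> \<bullet> w i \<tau>)) has_real_derivative - (2 * (w i \<tau> \<bullet> sl i (w i \<tau>)))) (at \<tau> within {0..})"
          using w_ode \<tau> by (intro DERIV_minus hvd_inner_self) auto
        have "(w i \<tau> - 0) \<bullet> (sl i (w i \<tau>) - sl i 0) \<le> 0"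
        proof -
          have "in_block blk i (w i \<tau>)" using w_block \<tau> by auto
          moreover have "in_block blk i 0" by (simp add: in_block_def)
          ultimately show ?thesis using s_mono by blast
        qed
        then show "0 \<le> - (2 * (w i \<tau> \<bullet> sl i (w i \<tau>)))" using s_zero by simp
      qed (use t in auto)
      then show ?thesis by (simp add: norm_le)
    qed
    then show ?thesis unfolding bnd_def by blast
  qed
  have bh: "bnd (\<lambda>t. h (x t $ k))" for k by (rule bnd_cont[OF h_cont bnd_nth[OF bx]])
  define U where "U j t = - (\<Sum>g\<in>UNIV. B$j$g *\<^sub>R
                 (H_row Bp Rm blk g *v \<zeta> t $ g
                  + \<kappa> t $ g *\<^sub>R (\<Sum>k\<in>UNIV. B$k$g *\<^sub>R h (x t $ k))))" for j t
  define F where "F j t = f (x t $ j) (U j t) (Rm j *v w j t)" for j t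
  have bU: "bnd (U j)" for j
    unfolding U_def
    by (intro bnd_minus bnd_sum finite bnd_scaleR bnd_const bnd_add bnd_mv bnd_nth bz bk bh)
  have bF: "bnd (F j)" for j
  proof -
    have "F j = (\<lambda>t. (\<lambda>(z, u, d). f z u d) (x t $ j, U j t, Rm j *v w j t))"
      by (simp add: F_def fun_eq_iff)
    moreover have "bnd (\<lambda>t. (\<lambda>(z, u, d). f z u d) (x t $ j, U j t, Rm j *v w j t))"
      by (intro bnd_cont[OF f_cont] bnd_pair bnd_nth bx bU bnd_mv bnd_const bw)
    ultimately show ?thesis by simp
  qed
  have bDh: "bnd (\<lambda>t. Dh (x t $ j))" for j by (rule bnd_cont[OF Dh_cont bnd_nth[OF bx]])
  define \<rho> where "\<rho> g t = (\<Sum>j\<in>UNIV. B$j$g *\<^sub>R h (x t $ j))" for g t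
  define G where "G g t = (\<Sum>j\<in>UNIV. B$j$g *\<^sub>R (Dh (x t $ j) *v F j t))" for g t
  have bG: "bnd (G g)" for g
    unfolding G_def by (intro bnd_sum finite bnd_scaleR bnd_const bnd_mv bDh bF)
  have hx_der: "((\<lambda>\<tau>. h (x \<tau> $ j)) has_vector_derivative Dh (x t $ j) *v F j t) (at t within {0..})"
    if t: "t \<ge> 0" for j t
  proof -
    have 1: "((\<lambda>\<tau>. x \<tau> $ j) has_derivative (\<lambda>s. s *\<^sub>R F j t)) (at t within {0..})"
      using x_ode t by (simp add: has_vector_derivative_def F_def U_def)
    have 2: "(h has_derivative (\<lambda>v. Dh (x t $ j) *v v)) (at (x t $ j) within ((\<lambda>\<tau>. x \<tau> $ j) ` {0..}))"
      using Dh has_derivative_at_withinI by blast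
    have "((h \<circ> (\<lambda>\<tau>. x \<tau> $ j)) has_derivative ((\<lambda>v. Dh (x t $ j) *v v) \<circ> (\<lambda>s. s *\<^sub>R F j t))) (at t within {0..})"
      by (rule diff_chain_within[OF 1 2])
    then show ?thesis by (simp add: has_vector_derivative_def o_def matrix_vector_mult_scaleR)
  qed
  have rho_der: "(\<rho> g has_vector_derivative G g t) (at t within {0..})" if "t \<ge> 0" for g t
    unfolding \<rho>_def G_def
    by (intro has_vector_derivative_sum hvd_scale hx_der that)
  have rho_lim: "(\<rho> g \<longlongrightarrow> 0) at_top" for g
  proof -
    obtain C where C: "\<forall>t\<ge>0. norm (G g t) \<le> C" using bG[of g] unfolding bnd_def by blast
    obtain L where L: "L > 0" "\<forall>s t. s \<ge> 0 \<longrightarrow> t \<ge> 0 \<longrightarrow> norm (\<rho> g s - \<rho> g t) \<le> L * \<bar>s - t\<bar>"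
      using lip_from_deriv[of "\<rho> g" "G g" C] rho_der C by blast
    obtain K where K: "\<forall>t\<ge>0. norm (\<kappa> t) \<le> K" using bk unfolding bnd_def by blast
    show ?thesis
    proof (rule barbalat[where k="\<lambda>t. \<kappa> t $ g" and c="\<delta> g" and K=K and L=L])
      fix t :: real assume t: "t \<ge> 0"
      show "((\<lambda>t. \<kappa> t $ g) has_real_derivative \<delta> g * (norm (\<rho> g t))\<^sup>2) (at t within {0..})"
        using \<kappa>_ode t by (simp add: \<rho>_def power2_norm_eq_inner)
      have "\<kappa> t $ g \<le> norm (\<kappa> t)"
        using component_le_norm_cart[of "\<kappa> t" g] by linarith
      then show "\<kappa> t $ g \<le> K" using K t by force
    qed (use \<delta>_pos L in auto)
  qed
  show ?thesis
  proof
    fix i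
    have ident: "h (x t $ i) - (1 / real CARD('v)) *\<^sub>R (\<Sum>j\<in>UNIV. h (x t $ j))
               = (\<Sum>g\<in>UNIV. Bp $ g $ i *\<^sub>R \<rho> g t)" for t
    proof -
      have "(\<Sum>g\<in>UNIV. Bp $ g $ i *\<^sub>R \<rho> g t)
          = (\<Sum>g\<in>UNIV. \<Sum>j\<in>UNIV. (B $ j $ g * Bp $ g $ i) *\<^sub>R h (x t $ j))"
        by (simp add: \<rho>_def scaleR_sum_right mult.commute)
      also have "\<dots> = (\<Sum>j\<in>UNIV. (\<Sum>g\<in>UNIV. B $ j $ g * Bp $ g $ i) *\<^sub>R h (x t $ j))"
        by (subst sum.swap) (simp add: scaleR_sum_left)
      also have "\<dots> = (\<Sum>j\<in>UNIV. ((if j = i then 1 else 0) - 1 / real CARD('v)) *\<^sub>R h (x t $ j))"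
      proof (rule sum.cong)
        fix j
        have "(\<Sum>g\<in>UNIV. B $ j $ g * Bp $ g $ i) = (B ** Bp) $ j $ i"
          by (simp add: matrix_matrix_mult_def)
        also have "\<dots> = (if j = i then 1 else 0) - 1 / real CARD('v)"
          unfolding B_def by (rule BBp_proj[OF edges A_conn Bp_def[unfolded B_def]])
        finally show "(\<Sum>g\<in>UNIV. B $ j $ g * Bp $ g $ i) *\<^sub>R h (x t $ j)
            = ((if j = i then 1 else 0) - 1 / real CARD('v)) *\<^sub>R h (x t $ j)" by simp
      qed simp
      also have "\<dots> = h (x t $ i) - (1 / real CARD('v)) *\<^sub>R (\<Sum>j\<in>UNIV. h (x t $ j))"
        by (simp add: scaleR_diff_left sum_subtractf scaleR_sum_right if_distrib[where f="\<lambda>c. c *\<^sub>R _"] cong: if_cong)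
      finally show ?thesis by simp
    qed
    have "((\<lambda>t. \<Sum>g\<in>UNIV. Bp $ g $ i *\<^sub>R \<rho> g t) \<longlongrightarrow> 0) at_top"
      by (intro tendsto_null_sum) (use tendsto_scaleR[OF tendsto_const rho_lim] in simp)
    then show "((\<lambda>t. norm (h (x t $ i) - (1 / real CARD('v)) *\<^sub>R (\<Sum>j\<in>UNIV. h (x t $ j)))) \<longlongrightarrow> 0) at_top"
      unfolding ident by (rule tendsto_norm_zero)
  qed
qed

end
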